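(* Let $Y\in\mathcal{P}^\infty(\Omega)$ and $\overline Y(\xi)=\frac1T\int_0^TY(s,\xi)\,ds$. Consider vector fields on $\mathbb{R}^{N+1}$ (coordinates $(t,\xi)$) given by $\widetilde Y^{(0)}_0=[1,0_{\mathbb{R}^N}]^T$, $\widetilde Y^{(0)}_1=[0,Y]^T$, $\widetilde Y^{(0)}_k=0$ for $k\ge2$, and a generator sequence $\widetilde G_0=[1,G_0]^T$, $\widetilde G_n=[0,G_n]^T$ ($n\ge1$), with $G_n$ smooth. Define $\widetilde Y^{(i)}_n$ for $i\ge1$ by the recursion $$\widetilde Y^{(i+1)}_n=\widetilde Y^{(i)}_{n+1}+\sum_{k=0}^nC_n^k\,L_{\widetilde G_{n-k}}\widetilde Y^{(i)}_k,\qquad (i,n)\in\mathbb{Z}_+^2,$$ and assume Lie's equations hold: $\widetilde Y^{(1)}_0=[0,\overline Y]^T$ and $\widetilde Y^{(m)}_0=0$ for all integers $m\ge2$. Define $M(j+k,j)=\widetilde Y^{(j)}_k$ for $k\ge0$, $j\ge1$ (and $M(i,j)=0$ for $i<j$). Then for every integer $j\ge2$ and every $l\in\{0,\dots,j-2\}$, $M(j,j-l)=0$, i.e. $\widetilde Y^{(j-l)}_l=0$.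
   Context: $\Omega\subset\mathbb{R}^N$ open, $T>0$; $\mathcal{P}^\infty(\Omega)$ denotes maps $\mathbb{R}^+\times\Omega\to\Omega$, $T$-periodic in $t$, smooth in $x$. $C_n^k$ is the binomial coefficient. For vector fields $H,A$ on $\mathbb{R}^{N+1}$, the Lie derivative is $L_HA=DA\cdot H-DH\cdot A$, $D$ the Jacobian in all $N+1$ variables $(t,\xi)$. *)

theory Defs
  imports "HOL-Analysis.Analysis"
begin

fun Ck_on :: "nat \<Rightarrow> 'a::real_normed_vector set \<Rightarrow> ('a \<Rightarrow> 'b::real_normed_vector) \<Rightarrow> bool" where
  "Ck_on 0 S f = continuous_on S f"
| "Ck_on (Suc k) S f = ((\<forall>x\<in>S. f differentiable (at x)) \<and>
      (\<forall>v. Ck_on k S (\<lambda>x. frechet_derivative f (at x) v)))"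

definition smooth_on :: "'a::real_normed_vector set \<Rightarrow> ('a \<Rightarrow> 'b::real_normed_vector) \<Rightarrow> bool" where
  "smooth_on S f = (\<forall>k. Ck_on k S f)"

definition lie_deriv :: "('a::real_normed_vector \<Rightarrow> 'a) \<Rightarrow> ('a \<Rightarrow> 'a) \<Rightarrow> 'a \<Rightarrow> 'a" where
  "lie_deriv H A x = frechet_derivative A (at x) (H x) - frechet_derivative H (at x) (A x)"

definition gen_field :: "(nat \<Rightarrow> real \<times> 'v \<Rightarrow> 'v::real_normed_vector) \<Rightarrow> nat \<Rightarrow> real \<times> 'v \<Rightarrow> real \<times> 'v" where
  "gen_field G n = (\<lambda>x. (if n = 0 then 1 else 0, G n x))"

definition avg :: "real \<Rightarrow> (real \<Rightarrow> 'v \<Rightarrow> 'v::euclidean_space) \<Rightarrow> 'v \<Rightarrow> 'v" where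
  "avg T Y \<xi> = (1 / T) *\<^sub>R integral {0..T} (\<lambda>s. Y s \<xi>)"

end

theory Submission
  imports Defs
begin

lemma fd_zero:
  assumes "open S" "\<forall>y\<in>S. A y = 0" "x \<in> S"
  shows "frechet_derivative A (at x) = (\<lambda>_. 0)"
proof -
  have "((\<lambda>_. 0) has_derivative (\<lambda>_. 0)) (at x)" by simp
  hence "(A has_derivative (\<lambda>_. 0)) (at x)"
    by (rule has_derivative_transform_within_open[OF _ assms(1) assms(3)]) (use assms(2) in auto)
  thus ?thesis using frechet_derivative_at by metis
qed

lemma gen_lin0:
  assumes "smooth_on S (G n)" "x \<in> S"
  shows "frechet_derivative (gen_field G n) (at x) 0 = 0"
proof -
  have "G n differentiable (at x)" using assms
    unfolding smooth_on_def by (metis Ck_on.simps(2))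
  then obtain g where g: "(G n has_derivative g) (at x)" unfolding differentiable_def by blast
  have "(gen_field G n has_derivative (\<lambda>h. (0, g h))) (at x)"
    unfolding gen_field_def by (intro has_derivative_Pair has_derivative_const g)
  hence "(\<lambda>h. (0, g h)) = frechet_derivative (gen_field G n) (at x)"
    by (rule frechet_derivative_at)
  moreover have "g 0 = 0" using g has_derivative_bounded_linear linear_0 bounded_linear.linear by blast
  ultimately show ?thesis by (metis zero_prod_def)
qed

theorem proposition2p5:
  fixes \<Omega> :: "(real^'n) set" and T :: real
    and Y :: "real \<Rightarrow> real^'n \<Rightarrow> real^'n"
    and G :: "nat \<Rightarrow> real \<times> (real^'n) \<Rightarrow> real^'n"
    and Yt :: "nat \<Rightarrow> nat \<Rightarrow> real \<times> (real^'n) \<Rightarrow> real \<times> (real^'n)"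
  assumes "open \<Omega>" and "T > 0"
    and Y_maps: "\<forall>t\<ge>0. \<forall>\<xi>\<in>\<Omega>. Y t \<xi> \<in> \<Omega>"
    and Y_per: "\<forall>t\<ge>0. \<forall>\<xi>\<in>\<Omega>. Y (t + T) \<xi> = Y t \<xi>"
    and Y_smooth: "\<forall>t\<ge>0. smooth_on \<Omega> (Y t)"
    and G_smooth: "\<forall>n. smooth_on (UNIV \<times> \<Omega>) (G n)"
    and init0: "\<forall>t. \<forall>\<xi>\<in>\<Omega>. Yt 0 0 (t, \<xi>) = (1, 0)"
    and init1: "\<forall>t. \<forall>\<xi>\<in>\<Omega>. Yt 0 1 (t, \<xi>) = (0, Y t \<xi>)"
    and init2: "\<forall>k\<ge>2. \<forall>t. \<forall>\<xi>\<in>\<Omega>. Yt 0 k (t, \<xi>) = 0"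
    and recur: "\<forall>i n. \<forall>t. \<forall>\<xi>\<in>\<Omega>. Yt (Suc i) n (t, \<xi>) =
       Yt i (Suc n) (t, \<xi>) +
       (\<Sum>k\<le>n. real (n choose k) *\<^sub>R lie_deriv (gen_field G (n - k)) (Yt i k) (t, \<xi>))"
    and lie1: "\<forall>t. \<forall>\<xi>\<in>\<Omega>. Yt 1 0 (t, \<xi>) = (0, avg T Y \<xi>)"
    and lie2: "\<forall>m\<ge>2. \<forall>t. \<forall>\<xi>\<in>\<Omega>. Yt m 0 (t, \<xi>) = 0"
  shows "\<forall>j\<ge>2. \<forall>l\<le>j - 2. \<forall>t. \<forall>\<xi>\<in>\<Omega>. Yt (j - l) l (t, \<xi>) = 0"
proof -
  let ?S = "UNIV \<times> \<Omega>"
  have opS: "open ?S" using assms(1) by (simp add: open_Times)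
  have main: "\<forall>k\<le>l. \<forall>m\<ge>2. \<forall>x\<in>?S. Yt m k x = 0" for l
  proof (induction l)
    case 0
    then show ?case using lie2 by auto
  next
    case (Suc l)
    have new: "Yt m (Suc l) x = 0" if m: "m \<ge> 2" and x: "x \<in> ?S" for m x
    proof -
      obtain t \<xi> where tx: "x = (t, \<xi>)" "\<xi> \<in> \<Omega>" using x by auto
      have z: "lie_deriv (gen_field G (l - k)) (Yt m k) x = 0" if "k \<le> l" for k
      proof -
        have zk: "\<forall>y\<in>?S. Yt m k y = 0" using Suc.IH that m by auto
        have "frechet_derivative (Yt m k) (at x) = (\<lambda>_. 0)" by (rule fd_zero[OF opS zk x])
        moreover have "Yt m k x = 0" using zk x by auto
        moreover have "frechet_derivative (gen_field G (l - k)) (at x) 0 = 0"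
          by (rule gen_lin0[where G=G and n="l-k", OF G_smooth[rule_format, of "l-k"] x])
        ultimately show ?thesis unfolding lie_deriv_def by simp
      qed
      have "Yt (Suc m) l x = 0" using Suc.IH m x by auto
      moreover have "Yt (Suc m) l x = Yt m (Suc l) x +
         (\<Sum>k\<le>l. real (l choose k) *\<^sub>R lie_deriv (gen_field G (l - k)) (Yt m k) x)"
        using recur tx by auto
      ultimately show ?thesis using z by simp
    qed
    show ?case using Suc.IH new by (auto simp: le_Suc_eq)
  qed
  show ?thesis
  proof (intro allI impI ballI)
    fix j l :: nat and t \<xi> assume "j \<ge> 2" "l \<le> j - 2" "\<xi> \<in> \<Omega>"
    thus "Yt (j - l) l (t, \<xi>) = 0" using main[of l] by auto
  qed
qed

end
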